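(* Let $(X,\mathcal{A},\mu,T)$ be an ergodic probability-preserving system and let $(E_k)_{k\geq1}$ be a sequence in $\mathcal{A}$ (with $\mu(E_k)>0$, so that the hitting times below are defined). Then the following are equivalent: (a) $\mu(E_k)\to0$ as $k\to\infty$; (b) $\nu(E_k)\to0$ as $k\to\infty$ for all probability measures $\nu\ll\mu$ on $(X,\mathcal{A})$; (c) $\varphi_{E_k}\to\infty$ in $\mu$-measure as $k\to\infty$; (d) $\varphi_{E_k}\to\infty$ in $\nu$-measure as $k\to\infty$ for all probability measures $\nu\ll\mu$; (e) $\varphi_{E_k}\to\infty$ in $\nu$-measure as $k\to\infty$ for some probability measure $\nu\ll\mu$.
   Context: A measure preserving transformation $T$ of a probability space $(X,\mathcal{A},\mu)$ is a measurable map $T:X\to X$ with $\mu\circ T^{-1}=\mu$; it may be non-invertible. For $Y\in\mathcal{A}$ with $\mu(Y)>0$, the first hitting time is $\varphi_Y(x):=\min\{n\geq1: T^n x\in Y\}\in\mathbb{N}\cup\{\infty\}$. "$\varphi_{E_k}\to\infty$ in $\nu$-measure" means $\nu(\varphi_{E_k}\leq N)\to0$ as $k\to\infty$ for every $N\geq1$. *)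

theory Defs
  imports "HOL-Probability.Probability"
begin

definition mpt :: "'a measure \<Rightarrow> ('a \<Rightarrow> 'a) \<Rightarrow> bool" where
  "mpt M T \<longleftrightarrow> T \<in> measurable M M \<and> distr M M T = M"

definition ergodic_mpt :: "'a measure \<Rightarrow> ('a \<Rightarrow> 'a) \<Rightarrow> bool" where
  "ergodic_mpt M T \<longleftrightarrow> mpt M T \<and>
     (\<forall>A \<in> sets M. T -` A \<inter> space M = A \<longrightarrow> measure M A = 0 \<or> measure M A = 1)"

definition hitting_time :: "('a \<Rightarrow> 'a) \<Rightarrow> 'a set \<Rightarrow> 'a \<Rightarrow> enat" where
  "hitting_time T Y x =
     (if \<exists>n\<ge>1. (T ^^ n) x \<in> Y then enat (LEAST n. n \<ge> 1 \<and> (T ^^ n) x \<in> Y) else \<infinity>)"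

definition tendsto_infinity_in_measure :: "'a measure \<Rightarrow> (nat \<Rightarrow> 'a \<Rightarrow> enat) \<Rightarrow> bool" where
  "tendsto_infinity_in_measure \<nu> f \<longleftrightarrow>
     (\<forall>N::nat. N \<ge> 1 \<longrightarrow> (\<lambda>k. measure \<nu> {x \<in> space \<nu>. f k x \<le> enat N}) \<longlonglongrightarrow> 0)"

definition abs_cont_prob :: "'a measure \<Rightarrow> 'a measure \<Rightarrow> bool" where
  "abs_cont_prob M \<nu> \<longleftrightarrow> prob_space \<nu> \<and> sets \<nu> = sets M \<and> absolutely_continuous M \<nu>"

end

theory Submission
  imports Defs
begin

lemma mpt_funpow:
  assumes "mpt M T"
  shows "T^^n \<in> measurable M M \<and> distr M M (T^^n) = M"
proof (induction n)
  case 0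
  then show ?case by (simp add: id_def)
next
  case (Suc n)
  have T: "T \<in> measurable M M" "distr M M T = M" using assms unfolding mpt_def by auto
  have m: "T \<circ> T^^n \<in> measurable M M" using Suc T by (auto intro: measurable_comp)
  have "distr M M (T \<circ> T^^n) = distr (distr M M (T^^n)) M T"
    using distr_distr[of T M M "T^^n" M] Suc T by simp
  also have "\<dots> = M" using Suc T by simp
  finally have d: "distr M M (T \<circ> T^^n) = M" .
  have e: "T^^Suc n = T \<circ> T^^n" by simp
  show ?case unfolding e using m d by blast
qed

lemma mpt_measure_pre:
  assumes "mpt M T" "S \<in> sets M"
  shows "measure M ((T^^n) -` S \<inter> space M) = measure M S"
proof -
  have "measure M S = measure (distr M M (T^^n)) S" using mpt_funpow[OF assms(1)] by simp
  also have "\<dots> = measure M ((T^^n) -` S \<inter> space M)"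
    using mpt_funpow[OF assms(1)] assms(2) by (intro measure_distr) auto
  finally show ?thesis by simp
qed

lemma mpt_pre_sets:
  assumes "mpt M T" "S \<in> sets M"
  shows "(T^^n) -` S \<inter> space M \<in> sets M"
  using mpt_funpow[OF assms(1)] assms(2) measurable_sets by blast

lemma hitting_set:
  "{x \<in> S. hitting_time T Y x \<le> enat N} = {x \<in> S. \<exists>n. 1 \<le> n \<and> n \<le> N \<and> (T^^n) x \<in> Y}"
proof (intro Collect_cong conj_cong refl)
  fix x
  show "hitting_time T Y x \<le> enat N \<longleftrightarrow> (\<exists>n. 1 \<le> n \<and> n \<le> N \<and> (T^^n) x \<in> Y)"
  proof
    assume h: "hitting_time T Y x \<le> enat N"
    then have ex: "\<exists>n\<ge>1. (T ^^ n) x \<in> Y" unfolding hitting_time_def by (auto split: if_splits)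
    let ?l = "LEAST n. n \<ge> 1 \<and> (T ^^ n) x \<in> Y"
    have ex': "\<exists>n. n \<ge> 1 \<and> (T ^^ n) x \<in> Y" using ex by blast
    have l: "?l \<ge> 1 \<and> (T ^^ ?l) x \<in> Y" using LeastI_ex[OF ex'] .
    have "hitting_time T Y x = enat ?l" by (simp only: hitting_time_def if_P[OF ex])
    then have "?l \<le> N" using h by simp
    with l show "\<exists>n. 1 \<le> n \<and> n \<le> N \<and> (T^^n) x \<in> Y" by blast
  next
    assume "\<exists>n. 1 \<le> n \<and> n \<le> N \<and> (T^^n) x \<in> Y"
    then obtain n where n: "1 \<le> n" "n \<le> N" "(T^^n) x \<in> Y" by blast
    have ex: "\<exists>n\<ge>1. (T ^^ n) x \<in> Y" using n by blast
    have "(LEAST n. n \<ge> 1 \<and> (T ^^ n) x \<in> Y) \<le> n" using n by (simp add: Least_le)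
    moreover have "hitting_time T Y x = enat (LEAST n. n \<ge> 1 \<and> (T ^^ n) x \<in> Y)"
      by (simp only: hitting_time_def if_P[OF ex])
    ultimately show "hitting_time T Y x \<le> enat N" using n by simp
  qed
qed

lemma hitting_set_union:
  "{x \<in> space M. hitting_time T Y x \<le> enat N} = (\<Union>n\<in>{1..N}. (T^^n) -` Y \<inter> space M)"
  unfolding hitting_set by auto

lemma hitting_set_sets:
  assumes "mpt M T" "Y \<in> sets M"
  shows "{x \<in> space M. hitting_time T Y x \<le> enat N} \<in> sets M"
  unfolding hitting_set_union using mpt_pre_sets[OF assms] by (intro sets.finite_UN) auto

lemma hitting_set_measure:
  assumes "prob_space M" "mpt M T" "Y \<in> sets M"
  shows "measure M {x \<in> space M. hitting_time T Y x \<le> enat N} \<le> N * measure M Y"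
proof -
  interpret prob_space M by fact
  have "measure M {x \<in> space M. hitting_time T Y x \<le> enat N}
      \<le> (\<Sum>n\<in>{1..N}. measure M ((T^^n) -` Y \<inter> space M))"
    unfolding hitting_set_union using mpt_pre_sets[OF assms(2,3)]
    by (intro finite_measure_subadditive_finite) auto
  also have "\<dots> = N * measure M Y" using mpt_measure_pre[OF assms(2,3)] by simp
  finally show ?thesis .
qed

lemma density_setup:
  assumes "prob_space M" "abs_cont_prob M \<nu>"
  obtains f where "f \<in> borel_measurable M"
    "\<And>A. A \<in> sets M \<Longrightarrow> emeasure \<nu> A = (\<integral>\<^sup>+x. f x * indicator A x \<partial>M)"
    "\<And>A. A \<in> sets M \<Longrightarrow> emeasure \<nu> A = ennreal (measure \<nu> A)"
    "sets \<nu> = sets M" "space \<nu> = space M"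
    "null_sets M \<subseteq> null_sets \<nu>" "prob_space \<nu>"
proof -
  interpret M: prob_space M by fact
  have nu: "prob_space \<nu>" "sets \<nu> = sets M" "absolutely_continuous M \<nu>"
    using assms(2) unfolding abs_cont_prob_def by auto
  interpret N: prob_space \<nu> by (fact nu(1))
  obtain f where f: "f \<in> borel_measurable M" "density M f = \<nu>"
    using M.Radon_Nikodym[OF nu(3) nu(2)] by blast
  have e: "emeasure \<nu> A = (\<integral>\<^sup>+x. f x * indicator A x \<partial>M)" if "A \<in> sets M" for A
    using emeasure_density[OF f(1) that] f(2) by simp
  have sp: "space \<nu> = space M" using nu(2) by (rule sets_eq_imp_space_eq)
  have em: "emeasure \<nu> A = ennreal (measure \<nu> A)" for A
    by (rule N.emeasure_eq_measure)
  have ns: "null_sets M \<subseteq> null_sets \<nu>" using nu(3) unfolding absolutely_continuous_def .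
  show ?thesis
    by (rule that[OF f(1) e em nu(2) sp ns nu(1)])
qed

lemma ac_small:
  assumes "prob_space M" "abs_cont_prob M \<nu>" "\<And>k. B k \<in> sets M"
    "(\<lambda>k. measure M (B k)) \<longlonglongrightarrow> 0"
  shows "(\<lambda>k. measure \<nu> (B k)) \<longlonglongrightarrow> 0"
proof -
  interpret M: prob_space M by fact
  obtain f where f: "f \<in> borel_measurable M"
    "\<And>A. A \<in> sets M \<Longrightarrow> emeasure \<nu> A = (\<integral>\<^sup>+x. f x * indicator A x \<partial>M)"
    "\<And>A. A \<in> sets M \<Longrightarrow> emeasure \<nu> A = ennreal (measure \<nu> A)"
    "sets \<nu> = sets M" "space \<nu> = space M"
    "null_sets M \<subseteq> null_sets \<nu>" "prob_space \<nu>"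
    using density_setup[OF assms(1,2)] by blast
  interpret N: prob_space \<nu> by (fact f(7))
  define S where "S c = {x\<in>space M. of_nat c < f x}" for c :: nat
  have Ssets: "S c \<in> sets M" for c unfolding S_def using f(1) by measurable
  have fin0: "integral\<^sup>N M (\<lambda>x. f x * indicator (space M) x) \<noteq> \<infinity>"
  proof -
    have "integral\<^sup>N M (\<lambda>x. f x * indicator (space M) x) = emeasure \<nu> (space M)"
      using f(2)[OF sets.top] by (rule sym)
    also have "\<dots> = ennreal (measure \<nu> (space M))" by (rule f(3)[OF sets.top])
    finally show ?thesis by simp
  qed
  have "integral\<^sup>N M (\<lambda>x. f x * indicator (space M) x) = integral\<^sup>N M f"
    by (rule nn_integral_cong) simp
  with fin0 have fin: "integral\<^sup>N M f \<noteq> \<infinity>" by simp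
  have ae: "AE x in M. f x \<noteq> \<infinity>" by (rule nn_integral_PInf_AE[OF f(1) fin])
  have meas: "{x\<in>space M. \<not> f x \<noteq> \<infinity>} \<in> sets M" using f(1) by measurable
  have nul: "{x\<in>space M. \<not> f x \<noteq> \<infinity>} \<in> null_sets M" using AE_iff_null[OF meas] ae by blast
  have inter: "(\<Inter>c. S c) = {x\<in>space M. \<not> f x \<noteq> \<infinity>}"
  proof (rule set_eqI, rule iffI)
    fix x assume "x \<in> (\<Inter>c. S c)"
    then have x: "x \<in> space M" "\<And>c. of_nat c < f x" unfolding S_def by blast+
    have "f x = \<infinity>"
    proof (rule ccontr)
      assume "f x \<noteq> \<infinity>"
      then have "f x < top" by (simp add: less_top)
      then obtain n where "f x < of_nat n" using ennreal_Ex_less_of_nat by blast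
      with x(2)[of n] show False using less_asym by blast
    qed
    then show "x \<in> {x\<in>space M. \<not> f x \<noteq> \<infinity>}" using x(1) by blast
  next
    fix x assume x: "x \<in> {x\<in>space M. \<not> f x \<noteq> \<infinity>}"
    have "of_nat c < f x" for c using x by (simp add: of_nat_less_top)
    then show "x \<in> (\<Inter>c. S c)" using x unfolding S_def by blast
  qed
  have "(\<lambda>c. measure \<nu> (S c)) \<longlonglongrightarrow> measure \<nu> (\<Inter>c. S c)"
  proof (rule N.finite_Lim_measure_decseq)
    show "range S \<subseteq> sets \<nu>" using Ssets f(4) by blast
    show "decseq S" unfolding decseq_def
    proof (intro allI impI subsetI)
      fix c d x assume cd: "c \<le> d" and x: "x \<in> S d"
      have "(of_nat c :: ennreal) \<le> of_nat d" using cd by simp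
      then show "x \<in> S c" using x unfolding S_def by (blast intro: le_less_trans)
    qed
  qed
  moreover have "measure \<nu> (\<Inter>c. S c) = 0"
  proof -
    have "(\<Inter>c. S c) \<in> null_sets \<nu>" unfolding inter using nul f(6) by blast
    then have "emeasure \<nu> (\<Inter>c. S c) = 0" by blast
    then show ?thesis using N.emeasure_eq_measure by simp
  qed
  ultimately have Slim: "(\<lambda>c. measure \<nu> (S c)) \<longlonglongrightarrow> 0" by simp
  have key: "measure \<nu> B \<le> measure \<nu> (S c) + real c * measure M B" if B: "B \<in> sets M" for B c
  proof -
    have "emeasure \<nu> B = (\<integral>\<^sup>+x. f x * indicator B x \<partial>M)" using f(2) B by simp
    also have "\<dots> \<le> (\<integral>\<^sup>+x. f x * indicator (S c) x + of_nat c * indicator B x \<partial>M)"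
    proof (rule nn_integral_mono)
      fix x assume x: "x \<in> space M"
      show "f x * indicator B x \<le> f x * indicator (S c) x + of_nat c * indicator B x"
      proof (cases "x \<in> S c")
        case True then show ?thesis by (cases "x \<in> B") auto
      next
        case False then have "f x \<le> of_nat c" using x by (auto simp: S_def not_less)
        then show ?thesis using False by (cases "x \<in> B") (simp_all add: indicator_def)
      qed
    qed
    also have "\<dots> = (\<integral>\<^sup>+x. f x * indicator (S c) x \<partial>M) + (\<integral>\<^sup>+x. of_nat c * indicator B x \<partial>M)"
      using f(1) Ssets B by (intro nn_integral_add) auto
    also have "\<dots> = emeasure \<nu> (S c) + of_nat c * emeasure M B"
      using f(2)[OF Ssets] B by (simp add: nn_integral_cmult_indicator)
    also have "\<dots> = ennreal (measure \<nu> (S c) + real c * measure M B)"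
      using f(3)[OF Ssets] M.emeasure_eq_measure
      by (simp add: ennreal_of_nat_eq_real_of_nat ennreal_mult'' ennreal_plus[symmetric])
    finally have h: "emeasure \<nu> B \<le> ennreal (measure \<nu> (S c) + real c * measure M B)" .
    have h2: "ennreal (measure \<nu> B) \<le> ennreal (measure \<nu> (S c) + real c * measure M B)"
      using h unfolding f(3)[OF B] .
    have "0 \<le> measure \<nu> (S c) + real c * measure M B" by simp
    then show ?thesis using h2 ennreal_le_iff by blast
  qed
  show ?thesis
  proof (rule LIMSEQ_I)
    fix r :: real assume r: "0 < r"
    obtain c where c: "norm (measure \<nu> (S c) - 0) < r / 2"
      using LIMSEQ_D[OF Slim, of "r/2"] r by auto
    have "0 < r / (2 * (real c + 1))" using r by simp
    from LIMSEQ_D[OF assms(4) this] obtain K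
      where K: "\<And>k. k \<ge> K \<Longrightarrow> norm (measure M (B k) - 0) < r / (2 * (real c + 1))" by blast
    show "\<exists>K. \<forall>k\<ge>K. norm (measure \<nu> (B k) - 0) < r"
    proof (intro exI allI impI)
      fix k assume k: "k \<ge> K"
      have mk: "measure M (B k) < r / (2 * (real c + 1))" using K[OF k] by simp
      then have "(real c + 1) * measure M (B k) < r / 2"
        by (simp add: field_simps)
      moreover have "real c * measure M (B k) \<le> (real c + 1) * measure M (B k)"
        by (simp add: distrib_right)
      ultimately have "measure \<nu> (B k) < r" using key[OF assms(3)[of k], of c] c by simp
      then show "norm (measure \<nu> (B k) - 0) < r" by simp
    qed
  qed
qed

lemma dens_lower:
  assumes "prob_space M" "abs_cont_prob M \<nu>"
  shows "\<exists>A c. A \<in> sets M \<and> measure M A > 0 \<and> c > 0 \<and>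
           (\<forall>B\<in>sets M. c * measure M (A \<inter> B) \<le> measure \<nu> B)"
proof -
  interpret M: prob_space M by fact
  obtain f where f: "f \<in> borel_measurable M"
    "\<And>A. A \<in> sets M \<Longrightarrow> emeasure \<nu> A = (\<integral>\<^sup>+x. f x * indicator A x \<partial>M)"
    "\<And>A. A \<in> sets M \<Longrightarrow> emeasure \<nu> A = ennreal (measure \<nu> A)"
    "sets \<nu> = sets M" "space \<nu> = space M"
    "null_sets M \<subseteq> null_sets \<nu>" "prob_space \<nu>"
    using density_setup[OF assms(1,2)] by blast
  interpret N: prob_space \<nu> by (fact f(7))
  define A where "A n = {x\<in>space M. ennreal (inverse (real (Suc n))) \<le> f x}" for n :: nat
  have Asets: "A n \<in> sets M" for n unfolding A_def using f(1) by measurable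
  have "\<exists>n. measure M (A n) > 0"
  proof (rule ccontr)
    assume nex: "\<not> (\<exists>n. measure M (A n) > 0)"
    have z: "measure M (A n) = 0" for n using nex measure_nonneg[of M "A n"] by (metis less_eq_real_def)
    have "A n \<in> null_sets M" for n
    proof (rule null_setsI)
      show "emeasure M (A n) = 0" using z[of n] M.emeasure_eq_measure by simp
    qed (rule Asets)
    then have U: "(\<Union>n. A n) \<in> null_sets M" by blast
    have "AE x in M. f x = 0"
    proof (rule AE_I'[OF U], rule subsetI)
      fix x assume "x \<in> {x\<in>space M. \<not> f x = 0}"
      then have x: "x \<in> space M" "f x \<noteq> 0" by auto
      show "x \<in> (\<Union>n. A n)"
      proof (cases "f x = \<infinity>")
        case True then have "x \<in> A 0" using x unfolding A_def by simp
        then show ?thesis by blast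
      next
        case False
        then obtain r where r: "f x = ennreal r" "0 \<le> r" by (cases "f x" rule: ennreal_cases) auto
        then have "0 < r" using x(2) by (cases "r = 0") auto
        then obtain n where "inverse (real (Suc n)) < r" using reals_Archimedean by blast
        then have "ennreal (inverse (real (Suc n))) \<le> f x" using r by (simp add: ennreal_leI)
        then show ?thesis using x(1) unfolding A_def by blast
      qed
    qed
    then have "integral\<^sup>N M f = integral\<^sup>N M (\<lambda>x. 0)" by (rule nn_integral_cong_AE)
    then have i0: "integral\<^sup>N M f = 0" by simp
    have "integral\<^sup>N M (\<lambda>x. f x * indicator (space M) x) = emeasure \<nu> (space M)"
      using f(2)[OF sets.top] by (rule sym)
    also have "\<dots> = ennreal (measure \<nu> (space \<nu>))" using f(3)[OF sets.top] f(5) by simp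
    also have "\<dots> = 1" using N.prob_space by simp
    finally have i1: "integral\<^sup>N M (\<lambda>x. f x * indicator (space M) x) = 1" .
    have "integral\<^sup>N M (\<lambda>x. f x * indicator (space M) x) = integral\<^sup>N M f"
      by (rule nn_integral_cong) simp
    with i0 i1 show False by simp
  qed
  then obtain n where n: "measure M (A n) > 0" by blast
  define c where "c = inverse (real (Suc n))"
  have c: "c > 0" unfolding c_def by simp
  have bound: "c * measure M (A n \<inter> B) \<le> measure \<nu> B" if B: "B \<in> sets M" for B
  proof -
    have AB: "A n \<inter> B \<in> sets M" using Asets B by blast
    have "ennreal (c * measure M (A n \<inter> B)) = ennreal c * emeasure M (A n \<inter> B)"
      using c M.emeasure_eq_measure by (simp add: ennreal_mult)
    also have "\<dots> = (\<integral>\<^sup>+x. ennreal c * indicator (A n \<inter> B) x \<partial>M)"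
      using AB by (simp add: nn_integral_cmult_indicator)
    also have "\<dots> \<le> (\<integral>\<^sup>+x. f x * indicator B x \<partial>M)"
    proof (rule nn_integral_mono)
      fix x assume x: "x \<in> space M"
      show "ennreal c * indicator (A n \<inter> B) x \<le> f x * indicator B x"
      proof (cases "x \<in> A n \<inter> B")
        case True
        then have "ennreal c \<le> f x" unfolding A_def c_def by blast
        then show ?thesis using True by simp
      next
        case False then show ?thesis by simp
      qed
    qed
    also have "\<dots> = ennreal (measure \<nu> B)" using f(2)[OF B] f(3)[OF B] by simp
    finally have h: "ennreal (c * measure M (A n \<inter> B)) \<le> ennreal (measure \<nu> B)" .
    show ?thesis using h ennreal_le_iff[of "measure \<nu> B" "c * measure M (A n \<inter> B)"] by simp
  qed
  show ?thesis using Asets[of n] n c bound by blast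
qed

lemma ergodic_union:
  assumes "prob_space M" "ergodic_mpt M T" "A \<in> sets M" "measure M A > 0"
  shows "(\<lambda>m. measure M (\<Union>j<m. (T^^j) -` A \<inter> space M)) \<longlonglongrightarrow> 1"
proof -
  interpret prob_space M by fact
  have mpt: "mpt M T" using assms(2) unfolding ergodic_mpt_def by blast
  have Tm: "T \<in> measurable M M" using mpt unfolding mpt_def by blast
  define P where "P j = (T^^j) -` A \<inter> space M" for j
  define U where "U n = (\<Union>j. P (j + n))" for n
  define V where "V = (\<Inter>n. U n)"
  have Psets: "P j \<in> sets M" for j unfolding P_def using mpt_pre_sets[OF mpt assms(3)] .
  have Usets: "U n \<in> sets M" for n unfolding U_def using Psets by blast
  have Vsets: "V \<in> sets M" unfolding V_def using Usets by blast
  have PT: "T x \<in> P j \<longleftrightarrow> x \<in> P (Suc j)" if x: "x \<in> space M" for x j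
  proof -
    have "T x \<in> space M" using measurable_space[OF Tm x] .
    moreover have "(T^^Suc j) x = (T^^j) (T x)" by (simp only: funpow_Suc_right comp_def)
    ultimately show ?thesis using x unfolding P_def by auto
  qed
  have UT: "T -` U n \<inter> space M = U (Suc n)" for n
  proof (rule set_eqI)
    fix x
    show "x \<in> T -` U n \<inter> space M \<longleftrightarrow> x \<in> U (Suc n)"
    proof (cases "x \<in> space M")
      case True
      have "x \<in> T -` U n \<longleftrightarrow> (\<exists>j. T x \<in> P (j + n))" unfolding U_def by blast
      also have "\<dots> \<longleftrightarrow> (\<exists>j. x \<in> P (Suc (j + n)))" using PT[OF True] by blast
      also have "\<dots> \<longleftrightarrow> x \<in> U (Suc n)" unfolding U_def by simp
      finally show ?thesis using True by blast
    next
      case False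
      then show ?thesis unfolding U_def P_def by blast
    qed
  qed
  have decU: "U (Suc n) \<subseteq> U n" for n
  proof
    fix x assume "x \<in> U (Suc n)"
    then obtain j where "x \<in> P (j + Suc n)" unfolding U_def by blast
    then have "x \<in> P (Suc j + n)" by simp
    then show "x \<in> U n" unfolding U_def by blast
  qed
  have VT: "T -` V \<inter> space M = V"
  proof -
    have "T -` V \<inter> space M = (\<Inter>n. T -` U n \<inter> space M)" unfolding V_def by blast
    also have "\<dots> = (\<Inter>n. U (Suc n))" using UT by simp
    also have "\<dots> = V"
    proof
      show "(\<Inter>n. U (Suc n)) \<subseteq> V"
      proof
        fix x assume x: "x \<in> (\<Inter>n. U (Suc n))"
        have "x \<in> U n" for n
        proof (cases n)
          case 0 then show ?thesis using x decU[of 0] by blast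
        next
          case (Suc m) then show ?thesis using x by blast
        qed
        then show "x \<in> V" unfolding V_def by blast
      qed
      show "V \<subseteq> (\<Inter>n. U (Suc n))" unfolding V_def by blast
    qed
    finally show ?thesis .
  qed
  have T1: "measure M (T -` S \<inter> space M) = measure M S" if "S \<in> sets M" for S
    using mpt_measure_pre[OF mpt that, of 1] by simp
  have Ueq: "measure M (U n) = measure M (U 0)" for n
  proof (induction n)
    case (Suc n)
    have "measure M (U (Suc n)) = measure M (T -` U n \<inter> space M)" using UT by simp
    also have "\<dots> = measure M (U n)" using T1[OF Usets] .
    finally show ?case using Suc by simp
  qed simp
  have "(\<lambda>n. measure M (U n)) \<longlonglongrightarrow> measure M V"
    unfolding V_def by (rule finite_Lim_measure_decseq) (use Usets decU in \<open>auto intro: decseq_SucI\<close>)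
  moreover have "(\<lambda>n. measure M (U n)) = (\<lambda>n. measure M (U 0))" by (intro ext Ueq)
  ultimately have "(\<lambda>n. measure M (U 0)) \<longlonglongrightarrow> measure M V" by simp
  then have VU: "measure M V = measure M (U 0)" using LIMSEQ_unique tendsto_const by blast
  have "A \<subseteq> U 0"
  proof
    fix x assume "x \<in> A"
    then have "x \<in> P 0" unfolding P_def using sets.sets_into_space[OF assms(3)] by auto
    then show "x \<in> U 0" unfolding U_def by force
  qed
  then have "measure M A \<le> measure M (U 0)" using Usets assms(3) by (intro finite_measure_mono) auto
  then have "measure M V \<noteq> 0" using VU assms(4) by simp
  then have "measure M V = 1" using assms(2) Vsets VT unfolding ergodic_mpt_def by blast
  then have U1: "measure M (U 0) = 1" using VU by simp
  have "(\<lambda>m. measure M (\<Union>j<m. P j)) \<longlonglongrightarrow> measure M (\<Union>m. \<Union>j<m. P j)"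
  proof (rule finite_Lim_measure_incseq)
    show "range (\<lambda>m. \<Union>j<m. P j) \<subseteq> sets M" using Psets by blast
    show "incseq (\<lambda>m. \<Union>j<m. P j)" by (rule incseq_SucI) (auto intro: less_SucI)
  qed
  moreover have "(\<Union>m. \<Union>j<m. P j) = U 0" unfolding U_def by auto
  ultimately show ?thesis using U1 unfolding P_def by simp
qed

lemma main_dir:
  assumes "prob_space M" "ergodic_mpt M T" "\<And>k. E k \<in> sets M" "abs_cont_prob M \<nu>"
    "tendsto_infinity_in_measure \<nu> (\<lambda>k. hitting_time T (E k))"
  shows "(\<lambda>k. measure M (E k)) \<longlonglongrightarrow> 0"
proof -
  interpret prob_space M by fact
  have mpt: "mpt M T" using assms(2) unfolding ergodic_mpt_def by blast
  have Tm: "T \<in> measurable M M" using mpt unfolding mpt_def by blast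
  obtain A c where A: "A \<in> sets M" "measure M A > 0" "c > 0"
    "\<And>B. B \<in> sets M \<Longrightarrow> c * measure M (A \<inter> B) \<le> measure \<nu> B"
    using dens_lower[OF assms(1,4)] by blast
  have "sets \<nu> = sets M" using assms(4) unfolding abs_cont_prob_def by blast
  then have sp: "space \<nu> = space M" by (rule sets_eq_imp_space_eq)
  define H where "H k m = {x\<in>space M. hitting_time T (E k) x \<le> enat m}" for k m
  have Hsets: "H k m \<in> sets M" for k m unfolding H_def by (rule hitting_set_sets[OF mpt assms(3)])
  have Hlim: "(\<lambda>k. measure \<nu> (H k m)) \<longlonglongrightarrow> 0" if "m \<ge> 1" for m
    using assms(5) that unfolding tendsto_infinity_in_measure_def H_def sp by blast
  define W where "W m = (\<Union>j<m. (T^^j) -` A \<inter> space M)" for m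
  have Wlim: "(\<lambda>m. measure M (W m)) \<longlonglongrightarrow> 1" unfolding W_def
    by (rule ergodic_union[OF assms(1,2) A(1,2)])
  have Wsets: "W m \<in> sets M" for m unfolding W_def using mpt_pre_sets[OF mpt A(1)] by blast
  have key: "measure M (E k) \<le> (1 - measure M (W m)) + real m * (measure \<nu> (H k m) / c)" for k m
  proof -
    define Q where "Q = (T^^m) -` E k \<inter> space M"
    have Qsets: "Q \<in> sets M" unfolding Q_def using mpt_pre_sets[OF mpt assms(3)] .
    define R where "R j = (T^^j) -` (A \<inter> H k m) \<inter> space M" for j
    have Rsets: "R j \<in> sets M" for j unfolding R_def using mpt_pre_sets[OF mpt] A(1) Hsets by blast
    have QW: "Q \<inter> W m \<subseteq> (\<Union>j<m. R j)"
    proof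
      fix x assume "x \<in> Q \<inter> W m"
      then obtain j where x: "x \<in> space M" "(T^^m) x \<in> E k" "j < m" "(T^^j) x \<in> A"
        unfolding Q_def W_def by blast
      have ysp: "(T^^j) x \<in> space M" using measurable_space[OF conjunct1[OF mpt_funpow[OF mpt]] x(1)] .
      have "(T^^(m-j)) ((T^^j) x) = (T^^(m - j + j)) x" by (simp only: funpow_add comp_def)
      also have "\<dots> = (T^^m) x" using x(3) by simp
      finally have "(T^^(m-j)) ((T^^j) x) \<in> E k" using x(2) by simp
      then have "(T^^j) x \<in> {y\<in>space M. \<exists>n. 1 \<le> n \<and> n \<le> m \<and> (T^^n) y \<in> E k}"
        using ysp x(3) by (intro CollectI conjI exI[of _ "m - j"]) auto
      then have "(T^^j) x \<in> H k m" unfolding H_def hitting_set .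
      then have "x \<in> R j" unfolding R_def using x(1,4) by blast
      then show "x \<in> (\<Union>j<m. R j)" using x(3) by blast
    qed
    have "measure M (E k) = measure M Q" unfolding Q_def using mpt_measure_pre[OF mpt assms(3)] by simp
    also have "\<dots> \<le> measure M ((Q \<inter> W m) \<union> (space M - W m))"
      using Qsets Wsets sets.sets_into_space[OF Qsets] by (intro finite_measure_mono) auto
    also have "\<dots> \<le> measure M (Q \<inter> W m) + measure M (space M - W m)"
      using Qsets Wsets by (intro measure_Un_le) auto
    also have "measure M (space M - W m) = 1 - measure M (W m)" using prob_compl[OF Wsets] .
    also have "measure M (Q \<inter> W m) \<le> measure M (\<Union>j<m. R j)"
      using QW Rsets by (intro finite_measure_mono) auto
    also have "\<dots> \<le> (\<Sum>j<m. measure M (R j))"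
      using Rsets by (intro finite_measure_subadditive_finite) auto
    also have "\<dots> = real m * measure M (A \<inter> H k m)"
    proof -
      have "measure M (R j) = measure M (A \<inter> H k m)" for j
        unfolding R_def using A(1) Hsets by (intro mpt_measure_pre[OF mpt]) blast
      then show ?thesis by simp
    qed
    also have "measure M (A \<inter> H k m) \<le> measure \<nu> (H k m) / c"
      using A(4)[OF Hsets] A(3) by (simp add: field_simps)
    finally show ?thesis by (simp add: mult_left_mono)
  qed
  show ?thesis
  proof (rule LIMSEQ_I)
    fix r :: real assume r: "0 < r"
    obtain m0 where m0: "\<And>m. m \<ge> m0 \<Longrightarrow> norm (measure M (W m) - 1) < r / 2"
      using LIMSEQ_D[OF Wlim, of "r/2"] r by auto
    define m where "m = Suc m0"
    have mpos: "real m > 0" unfolding m_def by simp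
    have Wm: "1 - measure M (W m) < r / 2" using m0[of m] unfolding m_def by auto
    have "0 < c * r / (2 * real m)" using A(3) r mpos by simp
    from LIMSEQ_D[OF Hlim[of m] this] obtain K
      where K: "\<And>k. k \<ge> K \<Longrightarrow> norm (measure \<nu> (H k m) - 0) < c * r / (2 * real m)"
      unfolding m_def by auto
    show "\<exists>K. \<forall>k\<ge>K. norm (measure M (E k) - 0) < r"
    proof (intro exI allI impI)
      fix k assume k: "k \<ge> K"
      have h: "measure \<nu> (H k m) < c * r / (2 * real m)" using K[OF k] by simp
      have "real m * (measure \<nu> (H k m) / c) < r / 2"
      proof -
        have "measure \<nu> (H k m) / c < (c * r / (2 * real m)) / c"
          using h A(3) by (rule divide_strict_right_mono)
        also have "\<dots> = r / (2 * real m)" using A(3) by simp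
        finally have "real m * (measure \<nu> (H k m) / c) < real m * (r / (2 * real m))"
          using mpos by (rule mult_strict_left_mono)
        also have "\<dots> = r / 2" using mpos by simp
        finally show ?thesis .
      qed
      then have "measure M (E k) < r" using key[of k m] Wm by linarith
      then show "norm (measure M (E k) - 0) < r" by simp
    qed
  qed
qed

theorem mainTheorem1:
  fixes M :: "'a measure" and T :: "'a \<Rightarrow> 'a" and E :: "nat \<Rightarrow> 'a set"
  assumes "prob_space M"
    and "ergodic_mpt M T"
    and "\<And>k. E k \<in> sets M"
    and "\<And>k. measure M (E k) > 0"
  shows "((\<lambda>k. measure M (E k)) \<longlonglongrightarrow> 0
          \<longleftrightarrow> (\<forall>\<nu>. abs_cont_prob M \<nu> \<longrightarrow> (\<lambda>k. measure \<nu> (E k)) \<longlonglongrightarrow> 0))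
       \<and> ((\<lambda>k. measure M (E k)) \<longlonglongrightarrow> 0
          \<longleftrightarrow> tendsto_infinity_in_measure M (\<lambda>k. hitting_time T (E k)))
       \<and> ((\<lambda>k. measure M (E k)) \<longlonglongrightarrow> 0
          \<longleftrightarrow> (\<forall>\<nu>. abs_cont_prob M \<nu> \<longrightarrow>
                 tendsto_infinity_in_measure \<nu> (\<lambda>k. hitting_time T (E k))))
       \<and> ((\<lambda>k. measure M (E k)) \<longlonglongrightarrow> 0
          \<longleftrightarrow> (\<exists>\<nu>. abs_cont_prob M \<nu> \<and>
                 tendsto_infinity_in_measure \<nu> (\<lambda>k. hitting_time T (E k))))"
proof -
  interpret prob_space M by fact
  have mpt: "mpt M T" using assms(2) unfolding ergodic_mpt_def by blast
  have self: "abs_cont_prob M M" unfolding abs_cont_prob_def absolutely_continuous_def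
    using assms(1) by blast
  let ?a = "(\<lambda>k. measure M (E k)) \<longlonglongrightarrow> 0"
  have AB: "(\<lambda>k. measure \<nu> (E k)) \<longlonglongrightarrow> 0" if a: ?a and nu: "abs_cont_prob M \<nu>" for \<nu>
    by (rule ac_small[OF assms(1) nu assms(3) a])
  have AD: "tendsto_infinity_in_measure \<nu> (\<lambda>k. hitting_time T (E k))"
    if a: ?a and nu: "abs_cont_prob M \<nu>" for \<nu>
    unfolding tendsto_infinity_in_measure_def
  proof (intro allI impI)
    fix N :: nat assume "N \<ge> 1"
    have "sets \<nu> = sets M" using nu unfolding abs_cont_prob_def by blast
    then have sp: "space \<nu> = space M" by (rule sets_eq_imp_space_eq)
    define H where "H k = {x\<in>space M. hitting_time T (E k) x \<le> enat N}" for k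
    have Hsets: "H k \<in> sets M" for k unfolding H_def by (rule hitting_set_sets[OF mpt assms(3)])
    have "(\<lambda>k. measure M (H k)) \<longlonglongrightarrow> 0"
    proof (rule tendsto_sandwich[of "\<lambda>k. 0" _ sequentially "\<lambda>k. real N * measure M (E k)"])
      show "\<forall>\<^sub>F k in sequentially. 0 \<le> measure M (H k)" by simp
      show "\<forall>\<^sub>F k in sequentially. measure M (H k) \<le> real N * measure M (E k)"
        unfolding H_def using hitting_set_measure[OF assms(1) mpt assms(3)] by simp
      show "(\<lambda>k. 0) \<longlonglongrightarrow> (0::real)" by simp
      show "(\<lambda>k. real N * measure M (E k)) \<longlonglongrightarrow> 0"
        using tendsto_mult_right_zero[OF a, of "real N"] by simp
    qed
    from ac_small[OF assms(1) nu Hsets this]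
    show "(\<lambda>k. measure \<nu> {x \<in> space \<nu>. hitting_time T (E k) x \<le> enat N}) \<longlonglongrightarrow> 0"
      unfolding H_def sp .
  qed
  have EA: ?a if "abs_cont_prob M \<nu>" "tendsto_infinity_in_measure \<nu> (\<lambda>k. hitting_time T (E k))" for \<nu>
    by (rule main_dir[OF assms(1,2,3) that])
  show ?thesis using AB AD EA self by blast
qed

end
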